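(* Let $X$ be a topological space whose frame of open sets has a presentation $\mathcal{O}X=\langle G\mid R\rangle$, with quotient frame homomorphism $\overline{q}\colon\mathcal{O}(\Sigma^G)\to\mathcal{O}X$, and give $\mathcal{O}(\Sigma^G)$ and $\mathcal{O}X$ their Scott topologies. If $\overline{q}\times\mathrm{id}_X\colon\mathcal{O}(\Sigma^G)\times X\to\mathcal{O}X\times X$ is a quotient map of topological spaces, then $\mathcal{O}X$ with the Scott topology, together with the evaluation map $\mathrm{ev}\colon\mathcal{O}X\times X\to\Sigma$, $\mathrm{ev}(U,x)=\top\iff x\in U$, is the exponential $\Sigma^X$ in $\mathrm{Top}$.
   Context: $\Sigma$ is Sierpiński space $\{\bot,\top\}$ with $\{\top\}$ open. For a set $G$, $\mathcal{O}(\Sigma^G)$ denotes the free frame on $G$ (frames: complete lattices with finite meets distributing over arbitrary joins). A presentation $\mathcal{O}X=\langle G\mid R\rangle$ means the frame of opens of $X$ is the quotient of the free frame on $G$ by the congruence generated by $R$, with quotient homomorphism $\overline{q}$. Scott topology on a poset with directed joins: $V$ is open iff it is an upset and whenever the join of a directed set lies in $V$ some member of that set lies in $V$. One has a continuous map $\widetilde{\mathrm{ev}}\colon\mathcal{O}(\Sigma^G)\times X\to\Sigma$, $\widetilde{\mathrm{ev}}(m,x)=\top$ iff $x\in\overline{q}(m)$, which has the weak universal property: every continuous $h\colon A\times X\to\Sigma$ factors (not necessarily uniquely) as $\widetilde{\mathrm{ev}}\circ(h'\times X)$. *)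

theory Defs
  imports "HOL-Analysis.Analysis"
begin

lemma istopology_sierpinski: "istopology (\<lambda>U::bool set. U \<in> {{}, {True}, UNIV})"
  unfolding istopology_def
proof (intro conjI allI impI)
  fix S T :: "bool set"
  assume "S \<in> {{}, {True}, UNIV}" "T \<in> {{}, {True}, UNIV}"
  then show "S \<inter> T \<in> {{}, {True}, UNIV}" by auto
next
  fix K :: "bool set set"
  assume K: "\<forall>S\<in>K. S \<in> {{}, {True}, UNIV}"
  show "\<Union>K \<in> {{}, {True}, UNIV}"
  proof (cases "UNIV \<in> K")
    case True then show ?thesis by auto
  next
    case False
    then have "K \<subseteq> {{}, {True}}" using K by auto
    then have "\<Union>K = {} \<or> \<Union>K = {True}" by blast
    then show ?thesis by auto
  qed
qed

definition sierpinski_space :: "bool topology" where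
  "sierpinski_space = topology (\<lambda>U. U \<in> {{}, {True}, UNIV})"

text \<open>The frame of opens of a space, ordered by inclusion (meets of finitely many
  elements are intersections, arbitrary joins are unions).\<close>
definition opens :: "'a topology \<Rightarrow> 'a set set" where
  "opens X = {U. openin X U}"

text \<open>The free frame on G, realised as the frame of opens of the product space Sigma^G.\<close>
definition free_frame :: "'g set \<Rightarrow> ('g \<Rightarrow> bool) set set" where
  "free_frame G = opens (product_topology (\<lambda>_. sierpinski_space) G)"

definition frame_hom :: "'a topology \<Rightarrow> 'b topology \<Rightarrow> ('a set \<Rightarrow> 'b set) \<Rightarrow> bool" where
  "frame_hom X Y f \<longleftrightarrow>
     (\<forall>U\<in>opens X. f U \<in> opens Y) \<and>
     f (topspace X) = topspace Y \<and>
     (\<forall>U\<in>opens X. \<forall>V\<in>opens X. f (U \<inter> V) = f U \<inter> f V) \<and>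
     (\<forall>S. S \<subseteq> opens X \<longrightarrow> f (\<Union>S) = \<Union>(f ` S))"

definition frame_congruence :: "'a topology \<Rightarrow> ('a set \<times> 'a set) set \<Rightarrow> bool" where
  "frame_congruence X \<theta> \<longleftrightarrow>
     equiv (opens X) \<theta> \<and>
     (\<forall>a b c d. (a, b) \<in> \<theta> \<longrightarrow> (c, d) \<in> \<theta> \<longrightarrow> (a \<inter> c, b \<inter> d) \<in> \<theta>) \<and>
     (\<forall>S. S \<subseteq> \<theta> \<longrightarrow> (\<Union>(fst ` S), \<Union>(snd ` S)) \<in> \<theta>)"

definition frame_congruence_generated ::
  "'a topology \<Rightarrow> ('a set \<times> 'a set) set \<Rightarrow> ('a set \<times> 'a set) set" where
  "frame_congruence_generated X R = \<Inter>{\<theta>. frame_congruence X \<theta> \<and> R \<subseteq> \<theta>}"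

definition is_presentation ::
  "'x topology \<Rightarrow> 'g set \<Rightarrow> (('g \<Rightarrow> bool) set \<times> ('g \<Rightarrow> bool) set) set
     \<Rightarrow> (('g \<Rightarrow> bool) set \<Rightarrow> 'x set) \<Rightarrow> bool" where
  "is_presentation X G R q \<longleftrightarrow>
     (let SG = product_topology (\<lambda>_. sierpinski_space) G in
       R \<subseteq> free_frame G \<times> free_frame G \<and>
       frame_hom SG X q \<and>
       q ` free_frame G = opens X \<and>
       (\<forall>a\<in>free_frame G. \<forall>b\<in>free_frame G.
          q a = q b \<longleftrightarrow> (a, b) \<in> frame_congruence_generated SG R))"

definition directed_set :: "'a set set \<Rightarrow> bool" where
  "directed_set D \<longleftrightarrow> D \<noteq> {} \<and> (\<forall>a\<in>D. \<forall>b\<in>D. \<exists>c\<in>D. a \<subseteq> c \<and> b \<subseteq> c)"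

text \<open>Scott-open subsets of a family L of sets ordered by inclusion, where directed
  joins are unions (as in a frame of opens, which is closed under unions).\<close>
definition scott_open :: "'a set set \<Rightarrow> 'a set set \<Rightarrow> bool" where
  "scott_open L V \<longleftrightarrow> V \<subseteq> L \<and>
     (\<forall>a\<in>V. \<forall>b\<in>L. a \<subseteq> b \<longrightarrow> b \<in> V) \<and>
     (\<forall>D. D \<subseteq> L \<and> directed_set D \<and> \<Union>D \<in> V \<longrightarrow> (\<exists>d\<in>D. d \<in> V))"

lemma scott_open_Int:
  assumes S: "scott_open L S" and T: "scott_open L T"
  shows "scott_open L (S \<inter> T)"
proof -
  have SL: "S \<subseteq> L" and Sup: "\<And>a b. a \<in> S \<Longrightarrow> b \<in> L \<Longrightarrow> a \<subseteq> b \<Longrightarrow> b \<in> S"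
    and Sd: "\<And>D. D \<subseteq> L \<Longrightarrow> directed_set D \<Longrightarrow> \<Union>D \<in> S \<Longrightarrow> \<exists>d\<in>D. d \<in> S"
    using S unfolding scott_open_def by auto
  have Tup: "\<And>a b. a \<in> T \<Longrightarrow> b \<in> L \<Longrightarrow> a \<subseteq> b \<Longrightarrow> b \<in> T"
    and Td: "\<And>D. D \<subseteq> L \<Longrightarrow> directed_set D \<Longrightarrow> \<Union>D \<in> T \<Longrightarrow> \<exists>d\<in>D. d \<in> T"
    using T unfolding scott_open_def by auto
  have "\<exists>d\<in>D. d \<in> S \<inter> T"
    if D: "D \<subseteq> L" "directed_set D" "\<Union>D \<in> S \<inter> T" for D
  proof -
    obtain d1 where d1: "d1 \<in> D" "d1 \<in> S" using Sd[OF D(1,2)] D(3) by auto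
    obtain d2 where d2: "d2 \<in> D" "d2 \<in> T" using Td[OF D(1,2)] D(3) by auto
    obtain c where c: "c \<in> D" "d1 \<subseteq> c" "d2 \<subseteq> c"
      using D(2) d1(1) d2(1) unfolding directed_set_def by blast
    have cL: "c \<in> L" using c(1) D(1) by auto
    have "c \<in> S" using Sup[OF d1(2) cL c(2)] .
    moreover have "c \<in> T" using Tup[OF d2(2) cL c(3)] .
    ultimately show ?thesis using c(1) by auto
  qed
  then show ?thesis unfolding scott_open_def using SL Sup Tup by auto
qed

lemma scott_open_Union:
  assumes K: "\<And>S. S \<in> K \<Longrightarrow> scott_open L S"
  shows "scott_open L (\<Union>K)"
proof -
  have "\<Union>K \<subseteq> L" using K unfolding scott_open_def by blast
  moreover have "b \<in> \<Union>K" if ab: "a \<in> \<Union>K" "b \<in> L" "a \<subseteq> b" for a b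
  proof -
    obtain S where S: "S \<in> K" "a \<in> S" using ab(1) by auto
    then have "b \<in> S" using K[OF S(1)] ab(2,3) unfolding scott_open_def by auto
    then show ?thesis using S(1) by auto
  qed
  moreover have "\<exists>d\<in>D. d \<in> \<Union>K" if D: "D \<subseteq> L" "directed_set D" "\<Union>D \<in> \<Union>K" for D
  proof -
    obtain S where S: "S \<in> K" "\<Union>D \<in> S" using D(3) by auto
    then obtain d where "d \<in> D" "d \<in> S" using K[OF S(1)] D(1,2) unfolding scott_open_def by auto
    then show ?thesis using S(1) by auto
  qed
  ultimately show ?thesis unfolding scott_open_def by auto
qed

lemma istopology_scott: "istopology (scott_open L)"
  unfolding istopology_def using scott_open_Int scott_open_Union by metis

definition scott_topology :: "'a set set \<Rightarrow> 'a set topology" where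
  "scott_topology L = topology (scott_open L)"

text \<open>Since maps are
  represented by HOL functions, equality of maps means equality on the
  underlying point sets.  The space A ranges over all spaces of the type 'a.\<close>
definition is_sierpinski_exponential ::
  "'e topology \<Rightarrow> 'x topology \<Rightarrow> ('e \<times> 'x \<Rightarrow> bool) \<Rightarrow> 'a itself \<Rightarrow> bool" where
  "is_sierpinski_exponential E X ev (_::'a itself) \<longleftrightarrow>
     continuous_map (prod_topology E X) sierpinski_space ev \<and>
     (\<forall>(A::'a topology) h. continuous_map (prod_topology A X) sierpinski_space h \<longrightarrow>
        (\<exists>h'. continuous_map A E h' \<and>
              (\<forall>a\<in>topspace A. \<forall>x\<in>topspace X. h (a, x) = ev (h' a, x)) \<and>
              (\<forall>h''. continuous_map A E h'' \<and>
                     (\<forall>a\<in>topspace A. \<forall>x\<in>topspace X. h (a, x) = ev (h'' a, x)) \<longrightarrow>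
                     (\<forall>a\<in>topspace A. h'' a = h' a))))"

end

theory Submission imports Defs begin

lemma openin_scott: "openin (scott_topology L) = scott_open L"
  unfolding scott_topology_def by (rule topology_inverse'[OF istopology_scott])

lemma topspace_scott: "topspace (scott_topology L) = L"
proof -
  have "scott_open L L" unfolding scott_open_def
  proof (intro conjI allI impI ballI)
    fix D assume "D \<subseteq> L \<and> directed_set D \<and> \<Union> D \<in> L"
    then have "D \<subseteq> L" "D \<noteq> {}" unfolding directed_set_def by simp_all
    then show "\<exists>d\<in>D. d \<in> L" by (metis all_not_in_conv subsetD)
  qed auto
  moreover have "\<And>V. scott_open L V \<Longrightarrow> V \<subseteq> L" unfolding scott_open_def by blast
  ultimately show ?thesis unfolding topspace_def openin_scott by blast
qed

lemma openin_sierp: "openin sierpinski_space U \<longleftrightarrow> U \<in> {{}, {True}, UNIV}"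
  unfolding sierpinski_space_def using istopology_sierpinski by simp

lemma topspace_sierp: "topspace sierpinski_space = UNIV"
  unfolding topspace_def openin_sierp by auto

abbreviation SGt :: "'g set \<Rightarrow> ('g \<Rightarrow> bool) topology" where
  "SGt G \<equiv> product_topology (\<lambda>_. sierpinski_space) G"

definition up :: "'g set \<Rightarrow> 'g set \<Rightarrow> ('g \<Rightarrow> bool) set" where
  "up G F = {f \<in> topspace (SGt G). \<forall>g\<in>F. f g}"

lemma up_open: assumes "finite F" "F \<subseteq> G" shows "openin (SGt G) (up G F)"
  using assms
proof (induction F rule: finite_induct)
  case empty
  have "up G {} = topspace (SGt G)" by (simp add: up_def)
  then show ?case by (metis openin_topspace)
next
  case (insert g F)
  have "openin (SGt G) {f \<in> topspace (SGt G). f g \<in> {True}}"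
    using continuous_map_product_projection[of g G "\<lambda>_. sierpinski_space"] insert.prems
    unfolding continuous_map_def openin_sierp by auto
  moreover have "up G (insert g F) = up G F \<inter> {f \<in> topspace (SGt G). f g \<in> {True}}"
    unfolding up_def by auto
  ultimately show ?case using insert by auto
qed

lemma open_basic:
  assumes "openin (SGt G) m" "f \<in> m"
  shows "\<exists>F. finite F \<and> F \<subseteq> G \<and> f \<in> up G F \<and> up G F \<subseteq> m"
proof -
  obtain U where U: "finite {i \<in> G. U i \<noteq> topspace sierpinski_space}"
    "\<forall>i\<in>G. openin sierpinski_space (U i)" "f \<in> Pi\<^sub>E G U" "Pi\<^sub>E G U \<subseteq> m"
    using bspec[OF assms(1)[unfolded openin_product_topology_alt] assms(2)] by blast
  define F where "F = {i \<in> G. U i \<noteq> UNIV}"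
  have fin: "finite F" using U(1) unfolding F_def topspace_sierp .
  have UF: "U g = {True}" if g: "g \<in> F" for g
  proof -
    have "g \<in> G" "U g \<noteq> UNIV" using g unfolding F_def by auto
    moreover have "U g \<in> {{}, {True}, UNIV}" using U(2) \<open>g \<in> G\<close> unfolding openin_sierp by blast
    moreover have "f g \<in> U g" using U(3) \<open>g \<in> G\<close> by (simp add: PiE_iff)
    ultimately show ?thesis by auto
  qed
  have "F \<subseteq> G" unfolding F_def by auto
  have "\<forall>g\<in>F. f g"
  proof
    fix g assume g: "g \<in> F"
    then have "f g \<in> U g" using U(3) \<open>F \<subseteq> G\<close> by (auto simp: PiE_iff)
    then show "f g" using UF[OF g] by simp
  qed
  moreover have "f \<in> topspace (SGt G)" using U(3) by (simp add: PiE_iff topspace_sierp)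
  ultimately have "f \<in> up G F" unfolding up_def by blast
  moreover have "up G F \<subseteq> Pi\<^sub>E G U"
  proof
    fix f' assume f': "f' \<in> up G F"
    show "f' \<in> Pi\<^sub>E G U" unfolding PiE_iff
    proof (intro conjI ballI)
      fix g assume g: "g \<in> G"
      show "f' g \<in> U g"
      proof (cases "g \<in> F")
        case True then show ?thesis using UF f' unfolding up_def by auto
      next
        case False then show ?thesis using g unfolding F_def by auto
      qed
    next
      show "f' \<in> extensional G" using f' unfolding up_def by (auto simp: PiE_iff)
    qed
  qed
  ultimately have "f \<in> up G F \<and> up G F \<subseteq> m" using U(4) by (meson order_trans)
  then show ?thesis using fin \<open>F \<subseteq> G\<close> by blast
qed

lemma open_upset:
  assumes "openin (SGt G) m" "f \<in> m" "f' \<in> topspace (SGt G)" "\<forall>g\<in>G. f g \<longrightarrow> f' g"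
  shows "f' \<in> m"
proof -
  obtain F where F: "finite F" "F \<subseteq> G" "f \<in> up G F" "up G F \<subseteq> m"
    using open_basic[OF assms(1,2)] by blast
  have "f' \<in> up G F" using F(2,3) assms(3,4) unfolding up_def by auto
  then show ?thesis using F(4) by auto
qed

lemma up_compact:
  assumes "F \<subseteq> G" "\<forall>d\<in>D. openin (SGt G) d" "up G F \<subseteq> \<Union>D"
  shows "\<exists>d\<in>D. up G F \<subseteq> d"
proof -
  define c where "c = restrict (\<lambda>g. g \<in> F) G"
  have c: "c \<in> up G F" using assms(1) unfolding up_def c_def by (auto simp: topspace_sierp)
  then obtain d where d: "d \<in> D" "c \<in> d" using assms(3) by auto
  have "up G F \<subseteq> d"
  proof
    fix f' assume f': "f' \<in> up G F"
    show "f' \<in> d"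
      by (rule open_upset[OF _ d(2)]) (use assms(2) d(1) f' in \<open>auto simp: up_def c_def\<close>)
  qed
  then show ?thesis using d(1) by auto
qed

lemma open_union_up:
  assumes "openin (SGt G) m"
  shows "m = \<Union>{up G F | F. finite F \<and> F \<subseteq> G \<and> up G F \<subseteq> m}"
proof
  show "m \<subseteq> \<Union>{up G F | F. finite F \<and> F \<subseteq> G \<and> up G F \<subseteq> m}"
  proof
    fix f assume "f \<in> m"
    then obtain F where "finite F \<and> F \<subseteq> G \<and> f \<in> up G F \<and> up G F \<subseteq> m"
      using open_basic[OF assms] by blast
    then show "f \<in> \<Union>{up G F | F. finite F \<and> F \<subseteq> G \<and> up G F \<subseteq> m}" by blast
  qed
qed auto


lemma free_frame_iff: "m \<in> free_frame G \<longleftrightarrow> openin (SGt G) m"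
  by (simp add: free_frame_def opens_def)

lemma q_join:
  assumes "frame_hom (SGt G) X q" "S \<subseteq> free_frame G"
  shows "q (\<Union>S) = \<Union>(q ` S)"
proof -
  have "\<forall>S. S \<subseteq> opens (SGt G) \<longrightarrow> q (\<Union>S) = \<Union>(q ` S)"
    using assms(1) unfolding frame_hom_def by (elim conjE)
  then show ?thesis using assms(2) unfolding free_frame_def by simp
qed

lemma q_open:
  assumes "frame_hom (SGt G) X q" "m \<in> free_frame G"
  shows "openin X (q m)"
proof -
  have "\<forall>U\<in>opens (SGt G). q U \<in> opens X"
    using assms(1) unfolding frame_hom_def by (elim conjE)
  then show ?thesis using assms(2) unfolding free_frame_def opens_def by simp
qed

lemma q_mono:
  assumes "frame_hom (SGt G) X q" "m \<in> free_frame G" "m' \<in> free_frame G" "m \<subseteq> m'"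
  shows "q m \<subseteq> q m'"
proof -
  have "{m, m'} \<subseteq> free_frame G" using assms(2,3) by simp
  then have "q (\<Union>{m, m'}) = \<Union>(q ` {m, m'})" by (rule q_join[OF assms(1)])
  moreover have "\<Union>{m, m'} = m'" using assms(4) by auto
  ultimately have "q m' = q m \<union> q m'" by simp
  then show ?thesis by blast
qed

lemma q_scott_cont:
  assumes hom: "frame_hom (SGt G) X q"
  shows "continuous_map (scott_topology (free_frame G)) (scott_topology (opens X)) q"
  unfolding continuous_map_def topspace_scott openin_scott
proof (intro conjI allI impI)
  show "q \<in> free_frame G \<rightarrow> opens X" using q_open[OF hom] by (auto simp: opens_def)
next
  fix V assume V: "scott_open (opens X) V"
  have Vsub: "V \<subseteq> opens X" and Vup: "\<And>a b. a \<in> V \<Longrightarrow> b \<in> opens X \<Longrightarrow> a \<subseteq> b \<Longrightarrow> b \<in> V"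
    and Vd: "\<And>D. D \<subseteq> opens X \<Longrightarrow> directed_set D \<Longrightarrow> \<Union>D \<in> V \<Longrightarrow> \<exists>d\<in>D. d \<in> V"
    using V unfolding scott_open_def by blast+
  have qo: "\<And>m. m \<in> free_frame G \<Longrightarrow> q m \<in> opens X" using q_open[OF hom] by (auto simp: opens_def)
  show "scott_open (free_frame G) {x \<in> free_frame G. q x \<in> V}"
    unfolding scott_open_def
  proof (intro conjI ballI allI impI)
    show "{x \<in> free_frame G. q x \<in> V} \<subseteq> free_frame G" by blast
  next
    fix a b assume a: "a \<in> {x \<in> free_frame G. q x \<in> V}" and b: "b \<in> free_frame G" and ab: "a \<subseteq> b"
    have "q a \<subseteq> q b" using a by (intro q_mono[OF hom _ b ab]) simp
    then have "q b \<in> V" using Vup[of "q a" "q b"] a qo[OF b] by blast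
    then show "b \<in> {x \<in> free_frame G. q x \<in> V}" using b by blast
  next
    fix D assume D: "D \<subseteq> free_frame G \<and> directed_set D \<and> \<Union>D \<in> {x \<in> free_frame G. q x \<in> V}"
    have qD: "q (\<Union>D) = \<Union>(q ` D)" using D by (intro q_join[OF hom]) simp
    have "q ` D \<subseteq> opens X" using qo D by blast
    moreover have "directed_set (q ` D)"
      unfolding directed_set_def
    proof (intro conjI ballI)
      show "q ` D \<noteq> {}" using D unfolding directed_set_def by blast
    next
      fix a b assume "a \<in> q ` D" "b \<in> q ` D"
      then obtain a' b' where ab: "a' \<in> D" "b' \<in> D" "a = q a'" "b = q b'" by blast
      then obtain c where c: "c \<in> D" "a' \<subseteq> c" "b' \<subseteq> c" using D unfolding directed_set_def by blast
      have F3: "a' \<in> free_frame G" "b' \<in> free_frame G" "c \<in> free_frame G"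
        using D c(1) ab(1,2) by auto
      have "q a' \<subseteq> q c" by (rule q_mono[OF hom F3(1) F3(3) c(2)])
      moreover have "q b' \<subseteq> q c" by (rule q_mono[OF hom F3(2) F3(3) c(3)])
      ultimately have "q a' \<subseteq> q c \<and> q b' \<subseteq> q c" by blast
      then show "\<exists>c\<in>q ` D. a \<subseteq> c \<and> b \<subseteq> c" using c(1) ab(3,4) by blast
    qed
    moreover have "\<Union>(q ` D) \<in> V" using D qD by simp
    ultimately obtain d where "d \<in> q ` D" "d \<in> V" using Vd by blast
    then show "\<exists>d\<in>D. d \<in> {x \<in> free_frame G. q x \<in> V}" using D by blast
  qed
qed

lemma point_nbhd:
  assumes hom: "frame_hom (SGt G) X q" and m: "m \<in> free_frame G" and x: "x \<in> q m"
  shows "\<exists>F. finite F \<and> F \<subseteq> G \<and> up G F \<subseteq> m \<and> x \<in> q (up G F)"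
proof -
  define S where "S = {up G F | F. finite F \<and> F \<subseteq> G \<and> up G F \<subseteq> m}"
  have "openin (SGt G) m" using m by (simp add: free_frame_iff)
  then have mS: "m = \<Union>S" unfolding S_def by (rule open_union_up)
  have "S \<subseteq> free_frame G" unfolding S_def using up_open by (auto simp: free_frame_iff)
  then have "q (\<Union>S) = \<Union>(q ` S)" by (rule q_join[OF hom])
  then have "q m = \<Union>(q ` S)" using mS by simp
  then obtain B where "B \<in> S" "x \<in> q B" using x by auto
  then show ?thesis unfolding S_def by blast
qed

lemma up_scott_open:
  assumes "F \<subseteq> G"
  shows "scott_open (free_frame G) {m \<in> free_frame G. up G F \<subseteq> m}"
  unfolding scott_open_def
proof (intro conjI ballI allI impI)
  fix D assume D: "D \<subseteq> free_frame G \<and> directed_set D \<and> \<Union>D \<in> {m \<in> free_frame G. up G F \<subseteq> m}"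
  then have "\<forall>d\<in>D. openin (SGt G) d" "up G F \<subseteq> \<Union>D" using free_frame_iff by blast+
  then obtain d where "d \<in> D" "up G F \<subseteq> d" using up_compact[OF assms] by blast
  then show "\<exists>d\<in>D. d \<in> {m \<in> free_frame G. up G F \<subseteq> m}" using D by blast
qed auto


lemma ev_cont:
  assumes hom: "frame_hom (SGt G) X q"
    and quot: "quotient_map
                 (prod_topology (scott_topology (free_frame G)) X)
                 (prod_topology (scott_topology (opens X)) X)
                 (\<lambda>(m, x). (q m, x))"
  shows "continuous_map (prod_topology (scott_topology (opens X)) X) sierpinski_space (\<lambda>(U, x). x \<in> U)"
proof -
  let ?E = "prod_topology (scott_topology (opens X)) X"
  let ?Q = "prod_topology (scott_topology (free_frame G)) X"
  let ?f = "\<lambda>(m, x). (q m, x)"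
  define P where "P = {z \<in> topspace ?E. (\<lambda>(U, x). x \<in> U) z \<in> {True}}"
  have qL: "\<And>m. m \<in> free_frame G \<Longrightarrow> q m \<in> opens X" using q_open[OF hom] by (simp add: opens_def)
  have Psub: "P \<subseteq> topspace ?E" unfolding P_def by blast
  define W where "W = {z \<in> topspace ?Q. ?f z \<in> P}"
  have W: "W = {(m, x). m \<in> free_frame G \<and> x \<in> topspace X \<and> x \<in> q m}"
    unfolding W_def P_def by (auto simp: topspace_scott qL)
  have "openin ?Q W"
    unfolding openin_prod_topology_alt
  proof (intro allI impI)
    fix m x assume mx: "(m, x) \<in> W"
    then have m: "m \<in> free_frame G" and x: "x \<in> q m" using W by auto
    obtain F0 where F0: "finite F0" "F0 \<subseteq> G" "up G F0 \<subseteq> m" "x \<in> q (up G F0)"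
      using point_nbhd[OF hom m x] by blast
    have upF: "up G F0 \<in> free_frame G" using up_open[OF F0(1,2)] by (simp add: free_frame_iff)
    define U where "U = {m' \<in> free_frame G. up G F0 \<subseteq> m'}"
    have oU: "openin (scott_topology (free_frame G)) U"
      unfolding U_def openin_scott by (rule up_scott_open[OF F0(2)])
    have oV: "openin X (q (up G F0))" by (rule q_open[OF hom upF])
    have "U \<times> q (up G F0) \<subseteq> W"
    proof
      fix z assume z: "z \<in> U \<times> q (up G F0)"
      then obtain m' x' where z': "z = (m', x')" "m' \<in> free_frame G" "up G F0 \<subseteq> m'" "x' \<in> q (up G F0)"
        unfolding U_def by blast
      have "q (up G F0) \<subseteq> q m'" by (rule q_mono[OF hom upF z'(2) z'(3)])
      moreover have "x' \<in> topspace X" using openin_subset[OF oV] z'(4) by blast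
      ultimately show "z \<in> W" unfolding W using z' by auto
    qed
    moreover have "m \<in> U" unfolding U_def using m F0(3) by blast
    ultimately show "\<exists>U V. openin (scott_topology (free_frame G)) U \<and> openin X V \<and> m \<in> U \<and> x \<in> V \<and> U \<times> V \<subseteq> W"
      using oU oV F0(4) by blast
  qed
  then have oP: "openin ?E P"
    using quot Psub unfolding quotient_map_def W_def by blast
  show ?thesis
    unfolding continuous_map_def
  proof (intro conjI allI impI)
    show "(\<lambda>(U, x). x \<in> U) \<in> topspace ?E \<rightarrow> topspace sierpinski_space"
      by (simp add: topspace_sierp)
  next
    fix U assume "openin sierpinski_space U"
    then have "U = {} \<or> U = {True} \<or> U = UNIV" unfolding openin_sierp by blast
    then show "openin ?E {z \<in> topspace ?E. (\<lambda>(U, x). x \<in> U) z \<in> U}"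
    proof (elim disjE)
      assume "U = {}" then show ?thesis by simp
    next
      assume "U = {True}" then show ?thesis using oP unfolding P_def by simp
    next
      assume U: "U = UNIV"
      have "{z \<in> topspace ?E. (\<lambda>(U, x). x \<in> U) z \<in> U} = topspace ?E" unfolding U by blast
      then show ?thesis using openin_topspace[of ?E] by simp
    qed
  qed
qed


lemma finite_nbhd:
  assumes "finite K" "a \<in> topspace A"
    and mono: "\<And>B. B \<in> K \<Longrightarrow> \<exists>N. openin A N \<and> a \<in> N \<and> (\<forall>a'\<in>N. P a' B)"
  shows "\<exists>N. openin A N \<and> a \<in> N \<and> (\<forall>a'\<in>N. \<forall>B\<in>K. P a' B)"
  using assms(1) mono
proof (induction K rule: finite_induct)
  case empty
  show ?case using assms(2) openin_topspace by blast
next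
  case (insert B K)
  obtain N1 where N1: "openin A N1" "a \<in> N1" "\<forall>a'\<in>N1. \<forall>B\<in>K. P a' B"
    using insert.IH insert.prems by blast
  obtain N2 where N2: "openin A N2" "a \<in> N2" "\<forall>a'\<in>N2. P a' B"
    using insert.prems by blast
  have "openin A (N1 \<inter> N2)" using N1(1) N2(1) by blast
  then show ?case using N1 N2 by blast
qed

lemma univ_part:
  assumes hom: "frame_hom (SGt G) X q" and surj: "q ` free_frame G = opens X"
    and hc: "continuous_map (prod_topology A X) sierpinski_space h"
  shows "\<exists>k. continuous_map A (scott_topology (free_frame G)) k \<and>
             (\<forall>a\<in>topspace A. q (k a) = {x \<in> topspace X. h (a, x)})"
proof -
  define Hset where "Hset = {z \<in> topspace (prod_topology A X). h z \<in> {True}}"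
  have oH: "openin (prod_topology A X) Hset"
    using hc unfolding continuous_map_def Hset_def openin_sierp by blast
  define Ks where "Ks a = {B. \<exists>F0. B = up G F0 \<and> finite F0 \<and> F0 \<subseteq> G \<and>
                        (\<exists>N. openin A N \<and> a \<in> N \<and> N \<times> q B \<subseteq> Hset)}" for a
  define k where "k a = \<Union>(Ks a)" for a
  have KsF: "Ks a \<subseteq> free_frame G" for a
    unfolding Ks_def using up_open by (auto simp: free_frame_iff)
  have kF: "k a \<in> free_frame G" for a
  proof -
    have "openin (SGt G) (\<Union>(Ks a))" using KsF[of a] by (intro openin_Union) (auto simp: free_frame_iff)
    then show ?thesis unfolding k_def by (simp add: free_frame_iff)
  qed
  have qk: "q (k a) = {x \<in> topspace X. h (a, x)}" if a: "a \<in> topspace A" for a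
  proof -
    have qk1: "q (k a) = \<Union>(q ` Ks a)" unfolding k_def by (rule q_join[OF hom KsF])
    show ?thesis
    proof
      show "q (k a) \<subseteq> {x \<in> topspace X. h (a, x)}"
      proof
        fix x assume "x \<in> q (k a)"
        then obtain B where B: "B \<in> Ks a" "x \<in> q B" using qk1 by auto
        then obtain N where N: "a \<in> N" "N \<times> q B \<subseteq> Hset" unfolding Ks_def by blast
        then have "(a, x) \<in> Hset" using B(2) by blast
        then show "x \<in> {x \<in> topspace X. h (a, x)}" unfolding Hset_def by auto
      qed
    next
      show "{x \<in> topspace X. h (a, x)} \<subseteq> q (k a)"
      proof
        fix x assume x: "x \<in> {x \<in> topspace X. h (a, x)}"
        then have "(a, x) \<in> Hset" unfolding Hset_def using a by auto
        then obtain U V where UV: "openin A U" "openin X V" "a \<in> U" "x \<in> V" "U \<times> V \<subseteq> Hset"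
          using oH[unfolded openin_prod_topology_alt, rule_format, OF \<open>(a, x) \<in> Hset\<close>] by blast
        have "V \<in> q ` free_frame G" using UV(2) surj by (simp add: opens_def)
        then obtain m where m: "m \<in> free_frame G" "V = q m" by blast
        obtain F0 where F0: "finite F0" "F0 \<subseteq> G" "up G F0 \<subseteq> m" "x \<in> q (up G F0)"
          using point_nbhd[OF hom m(1), of x] UV(4) m(2) by auto
        have upF: "up G F0 \<in> free_frame G" using up_open[OF F0(1,2)] by (simp add: free_frame_iff)
        have "q (up G F0) \<subseteq> V" using q_mono[OF hom upF m(1) F0(3)] m(2) by simp
        then have "U \<times> q (up G F0) \<subseteq> Hset" using UV(5) by blast
        then have "up G F0 \<in> Ks a" unfolding Ks_def using F0(1,2) UV(1,3) by (intro CollectI exI conjI) (rule refl)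
        then have "q (up G F0) \<subseteq> \<Union>(q ` Ks a)" by blast
        then have "x \<in> \<Union>(q ` Ks a)" using F0(4) by (rule subsetD)
        then show "x \<in> q (k a)" unfolding qk1 .
      qed
    qed
  qed
  have kc: "continuous_map A (scott_topology (free_frame G)) k"
    unfolding continuous_map_def topspace_scott openin_scott
  proof (intro conjI allI impI)
    show "k \<in> topspace A \<rightarrow> free_frame G" using kF by blast
  next
    fix S assume S: "scott_open (free_frame G) S"
    have Sup: "\<And>a b. a \<in> S \<Longrightarrow> b \<in> free_frame G \<Longrightarrow> a \<subseteq> b \<Longrightarrow> b \<in> S"
      and Sd: "\<And>D. D \<subseteq> free_frame G \<Longrightarrow> directed_set D \<Longrightarrow> \<Union>D \<in> S \<Longrightarrow> \<exists>d\<in>D. d \<in> S"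
      using S unfolding scott_open_def by blast+
    show "openin A {a \<in> topspace A. k a \<in> S}"
      unfolding openin_subopen[of A "{a \<in> topspace A. k a \<in> S}"]
    proof
      fix a assume a: "a \<in> {a \<in> topspace A. k a \<in> S}"
      define D where "D = {\<Union>K' | K'. K' \<subseteq> Ks a \<and> finite K'}"
      have DF: "D \<subseteq> free_frame G"
      proof
        fix d assume "d \<in> D"
        then obtain K' where K': "d = \<Union>K'" "K' \<subseteq> Ks a" unfolding D_def by blast
        have "openin (SGt G) (\<Union>K')" using K'(2) KsF[of a]
          by (intro openin_Union) (auto simp: free_frame_iff)
        then show "d \<in> free_frame G" using K'(1) by (simp add: free_frame_iff)
      qed
      have Ddir: "directed_set D"
        unfolding directed_set_def
      proof (intro conjI ballI)
        have "\<Union>{} \<in> D" unfolding D_def by blast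
        then show "D \<noteq> {}" by blast
      next
        fix d1 d2 assume "d1 \<in> D" "d2 \<in> D"
        then obtain K1 K2 where K: "d1 = \<Union>K1" "K1 \<subseteq> Ks a" "finite K1" "d2 = \<Union>K2" "K2 \<subseteq> Ks a" "finite K2"
          unfolding D_def by blast
        have "\<Union>(K1 \<union> K2) \<in> D" unfolding D_def using K by blast
        moreover have "d1 \<subseteq> \<Union>(K1 \<union> K2)" "d2 \<subseteq> \<Union>(K1 \<union> K2)" using K by auto
        ultimately show "\<exists>c\<in>D. d1 \<subseteq> c \<and> d2 \<subseteq> c" by blast
      qed
      have "\<Union>D = k a"
      proof
        show "\<Union>D \<subseteq> k a" unfolding D_def k_def by blast
      next
        show "k a \<subseteq> \<Union>D"
        proof
          fix f assume "f \<in> k a"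
          then obtain B where B: "B \<in> Ks a" "f \<in> B" unfolding k_def by blast
          have "\<Union>{B} \<in> D" unfolding D_def using B(1) by blast
          then show "f \<in> \<Union>D" using B(2) by auto
        qed
      qed
      then have "\<Union>D \<in> S" using a by simp
      then obtain d where d: "d \<in> D" "d \<in> S" using Sd[OF DF Ddir] by blast
      then obtain K' where K': "d = \<Union>K'" "K' \<subseteq> Ks a" "finite K'" unfolding D_def by blast
      have "\<exists>N. openin A N \<and> a \<in> N \<and> (\<forall>a'\<in>N. \<forall>B\<in>K'. B \<in> Ks a')"
      proof (rule finite_nbhd[OF K'(3)])
        show "a \<in> topspace A" using a by blast
      next
        fix B assume "B \<in> K'"
        then have "B \<in> Ks a" using K'(2) by blast
        then obtain F0 N where FN: "B = up G F0" "finite F0" "F0 \<subseteq> G" "openin A N" "a \<in> N" "N \<times> q B \<subseteq> Hset"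
          unfolding Ks_def by blast
        have "\<forall>a'\<in>N. B \<in> Ks a'" unfolding Ks_def using FN by blast
        then show "\<exists>N. openin A N \<and> a \<in> N \<and> (\<forall>a'\<in>N. B \<in> Ks a')" using FN(4,5) by blast
      qed
      then obtain N where N: "openin A N" "a \<in> N" "\<forall>a'\<in>N. \<forall>B\<in>K'. B \<in> Ks a'" by blast
      have "N \<subseteq> {a \<in> topspace A. k a \<in> S}"
      proof
        fix a' assume a': "a' \<in> N"
        then have "K' \<subseteq> Ks a'" using N(3) by blast
        then have "d \<subseteq> k a'" unfolding K'(1) k_def by blast
        then have "k a' \<in> S" using Sup[OF d(2) kF] by blast
        moreover have "a' \<in> topspace A" using openin_subset[OF N(1)] a' by blast
        ultimately show "a' \<in> {a \<in> topspace A. k a \<in> S}" by blast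
      qed
      then show "\<exists>T. openin A T \<and> a \<in> T \<and> T \<subseteq> {a \<in> topspace A. k a \<in> S}"
        using N(1,2) by blast
    qed
  qed
  show ?thesis using kc qk by blast
qed


theorem mainTheorem5:
  fixes X :: "'x topology" and G :: "'g set"
    and R :: "(('g \<Rightarrow> bool) set \<times> ('g \<Rightarrow> bool) set) set"
    and q :: "('g \<Rightarrow> bool) set \<Rightarrow> 'x set"
  assumes pres: "is_presentation X G R q"
    and quot: "quotient_map
                 (prod_topology (scott_topology (free_frame G)) X)
                 (prod_topology (scott_topology (opens X)) X)
                 (\<lambda>(m, x). (q m, x))"
  shows "is_sierpinski_exponential (scott_topology (opens X)) X
           (\<lambda>(U, x). x \<in> U) TYPE('a)"
proof -
  have hom: "frame_hom (SGt G) X q"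
    using pres unfolding is_presentation_def Let_def by (elim conjE)
  have surj: "q ` free_frame G = opens X"
    using pres unfolding is_presentation_def Let_def by (elim conjE)
  have qc: "continuous_map (scott_topology (free_frame G)) (scott_topology (opens X)) q"
    by (rule q_scott_cont[OF hom])
  show ?thesis
    unfolding is_sierpinski_exponential_def
  proof (intro conjI allI impI)
    show "continuous_map (prod_topology (scott_topology (opens X)) X) sierpinski_space (\<lambda>(U, x). x \<in> U)"
      by (rule ev_cont[OF hom quot])
  next
    fix A :: "'a topology" and h
    assume hc: "continuous_map (prod_topology A X) sierpinski_space h"
    obtain k where kc: "continuous_map A (scott_topology (free_frame G)) k"
      and qk: "\<forall>a\<in>topspace A. q (k a) = {x \<in> topspace X. h (a, x)}"
      using univ_part[OF hom surj hc] by blast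
    have c: "continuous_map A (scott_topology (opens X)) (q \<circ> k)"
      by (rule continuous_map_compose[OF kc qc])
    have eq: "\<forall>a\<in>topspace A. \<forall>x\<in>topspace X. h (a, x) = (\<lambda>(U, x). x \<in> U) ((q \<circ> k) a, x)"
      using qk by simp
    have uniq: "\<forall>a\<in>topspace A. h'' a = (q \<circ> k) a"
      if h'': "continuous_map A (scott_topology (opens X)) h''"
        "\<forall>a\<in>topspace A. \<forall>x\<in>topspace X. h (a, x) = (\<lambda>(U, x). x \<in> U) (h'' a, x)" for h''
    proof
      fix a assume a: "a \<in> topspace A"
      have "h'' a \<in> opens X" using h''(1) a unfolding continuous_map_def topspace_scott by blast
      then have sub: "h'' a \<subseteq> topspace X" by (simp add: opens_def openin_subset)
      have "h'' a = {x \<in> topspace X. h (a, x)}"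
      proof
        show "h'' a \<subseteq> {x \<in> topspace X. h (a, x)}" using sub h''(2) a by auto
        show "{x \<in> topspace X. h (a, x)} \<subseteq> h'' a" using h''(2) a by auto
      qed
      then show "h'' a = (q \<circ> k) a" using qk a by simp
    qed
    show "\<exists>h'. continuous_map A (scott_topology (opens X)) h' \<and>
              (\<forall>a\<in>topspace A. \<forall>x\<in>topspace X. h (a, x) = (\<lambda>(U, x). x \<in> U) (h' a, x)) \<and>
              (\<forall>h''. continuous_map A (scott_topology (opens X)) h'' \<and>
                     (\<forall>a\<in>topspace A. \<forall>x\<in>topspace X. h (a, x) = (\<lambda>(U, x). x \<in> U) (h'' a, x)) \<longrightarrow>
                     (\<forall>a\<in>topspace A. h'' a = h' a))"
      using c eq uniq by blast
  qed
qed

end
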